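(* Assume Conditions A, B, C with $k=k_1+1>1$ and suppose $N:=\inf_{\lambda\in\mathbb{R}}\min_{|e|=1}H(e,\lambda e\otimes e-I)$ satisfies $-\infty<N<0$. Let $\mu>0$, $R>0$, fix $z\in\mathbb{R}^n$, $r=|x-z|$, $c_k=\left(\frac{k+1}{k-1}\right)^k$, and $E=\frac{R^{k+1}}{c_k\mu^{k-1}(k-1)|N|}$. Then the function $$w(x,t)=\frac{\mu\left[1-(r/R)^{(k+1)/k}\right]^{k/(k-1)}}{(1+t/E)^{1/(k-1)}}$$ is nonnegative, vanishes on $|x-z|=R$, satisfies $w(z,t)=\mu(1+t/E)^{-1/(k-1)}$, and is a viscosity sub-solution of $H(Dw,D^2w)-w_t\ge0$ in $B_R(z)\times(0,T)$ for every $T>0$.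
   Context: $S^{n\times n}$ denotes the real symmetric matrices with the usual order, $I$ the identity, $O$ the zero matrix, $(e\otimes e)_{ij}=e_ie_j$. $H:\mathbb{R}^n\times S^{n\times n}\to\mathbb{R}$ is continuous and satisfies: Condition A: $H(q,X)\le H(q,Y)$ when $X\le Y$ and $H(q,O)=0$. Condition B: there is $k_1\ge0$ with $H(\theta q,X)=|\theta|^{k_1}H(q,X)$ for all $\theta\in\mathbb{R}$ and $H(q,\theta X)=\theta H(q,X)$ for $\theta>0$. Condition C: $\max_{|e|=1}H(e,-I)<0<\min_{|e|=1}H(e,I)$ and $\sup_{\lambda\in\mathbb{R}}\max_{|e|=1}H(e,\lambda e\otimes e+I)<\infty$. $B_R(z)$ is the open ball of radius $R$ about $z$. *)

theory Defs
  imports "HOL-Analysis.Analysis"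
begin

definition sym_mat :: "real^'n^'n \<Rightarrow> bool" where
  "sym_mat X \<longleftrightarrow> transpose X = X"

definition mat_le :: "real^'n^'n \<Rightarrow> real^'n^'n \<Rightarrow> bool" where
  "mat_le X Y \<longleftrightarrow> (\<forall>v. 0 \<le> v \<bullet> ((Y - X) *v v))"

definition outer :: "real^'n \<Rightarrow> real^'n^'n" where
  "outer e = (\<chi> i j. e$i * e$j)"

definition condA :: "(real^'n \<Rightarrow> real^'n^'n \<Rightarrow> real) \<Rightarrow> bool" where
  "condA H \<longleftrightarrow>
     (\<forall>q X Y. sym_mat X \<and> sym_mat Y \<and> mat_le X Y \<longrightarrow> H q X \<le> H q Y) \<and>
     (\<forall>q. H q 0 = 0)"

definition condB :: "(real^'n \<Rightarrow> real^'n^'n \<Rightarrow> real) \<Rightarrow> real \<Rightarrow> bool" where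
  "condB H k1 \<longleftrightarrow> 0 \<le> k1 \<and>
     (\<forall>\<theta> q X. sym_mat X \<longrightarrow> H (\<theta> *\<^sub>R q) X = \<bar>\<theta>\<bar> powr k1 * H q X) \<and>
     (\<forall>\<theta> q X. sym_mat X \<and> \<theta> > 0 \<longrightarrow> H q (\<theta> *\<^sub>R X) = \<theta> * H q X)"

definition condC :: "(real^'n \<Rightarrow> real^'n^'n \<Rightarrow> real) \<Rightarrow> bool" where
  "condC H \<longleftrightarrow>
     (SUP e\<in>sphere 0 1. H e (- mat 1)) < 0 \<and>
     0 < (INF e\<in>sphere 0 1. H e (mat 1)) \<and>
     (\<exists>M. \<forall>l. \<forall>e\<in>sphere 0 1. H e (l *\<^sub>R outer e + mat 1) \<le> M)"

definition usc_on :: "('a::metric_space \<Rightarrow> real) \<Rightarrow> 'a set \<Rightarrow> bool" where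
  "usc_on f S \<longleftrightarrow> (\<forall>p\<in>S. \<forall>\<epsilon>>0. \<exists>\<delta>>0. \<forall>q\<in>S. dist q p < \<delta> \<longrightarrow> f q < f p + \<epsilon>)"

definition test_fun ::
  "(real^'n \<Rightarrow> real \<Rightarrow> real) \<Rightarrow> (real^'n \<Rightarrow> real \<Rightarrow> real^'n) \<Rightarrow>
   (real^'n \<Rightarrow> real \<Rightarrow> real^'n^'n) \<Rightarrow> (real^'n \<Rightarrow> real \<Rightarrow> real) \<Rightarrow>
   ((real^'n) \<times> real) set \<Rightarrow> bool" where
  "test_fun phi Dphi D2phi phit U \<longleftrightarrow> open U \<and>
     (\<forall>(x,t)\<in>U. ((\<lambda>y. phi y t) has_derivative (\<lambda>h. Dphi x t \<bullet> h)) (at x) \<and>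
                ((\<lambda>y. Dphi y t) has_derivative (\<lambda>h. D2phi x t *v h)) (at x) \<and>
                ((\<lambda>s. phi x s) has_real_derivative phit x t) (at t)) \<and>
     continuous_on U (\<lambda>(x,t). phi x t) \<and> continuous_on U (\<lambda>(x,t). Dphi x t) \<and>
     continuous_on U (\<lambda>(x,t). D2phi x t) \<and> continuous_on U (\<lambda>(x,t). phit x t)"

definition visc_subsol ::
  "(real^'n \<Rightarrow> real^'n^'n \<Rightarrow> real) \<Rightarrow> (real^'n \<Rightarrow> real \<Rightarrow> real) \<Rightarrow>
   (real^'n) set \<Rightarrow> real \<Rightarrow> bool" where
  "visc_subsol H w \<Omega> T \<longleftrightarrow>
     usc_on (\<lambda>(x,t). w x t) (\<Omega> \<times> {0<..<T}) \<and>
     (\<forall>x0 t0 phi Dphi D2phi phit U.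
        x0 \<in> \<Omega> \<and> t0 \<in> {0<..<T} \<and> (x0,t0) \<in> U \<and>
        test_fun phi Dphi D2phi phit U \<and>
        (\<forall>(x,t)\<in>U \<inter> (\<Omega> \<times> {0<..<T}). w x t - phi x t \<le> w x0 t0 - phi x0 t0)
        \<longrightarrow> H (Dphi x0 t0) (D2phi x0 t0) - phit x0 t0 \<ge> 0)"

end

theory Submission
  imports Defs
begin

lemma dist_shift: "dist x (x + a) = norm (a::'a::real_normed_vector)"
  by (metis add_diff_cancel_left' dist_commute dist_norm)

lemma schwarz_bound:
  fixes f :: "real^'n \<Rightarrow> real" and Df :: "real^'n \<Rightarrow> real^'n" and D2 :: "real^'n^'n"
  assumes e: "e > 0" and df: "\<And>y. y \<in> ball x e \<Longrightarrow> (f has_derivative (\<lambda>h. Df y \<bullet> h)) (at y)"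
    and d2: "(Df has_derivative (\<lambda>h. D2 *v h)) (at x)" and eps: "\<epsilon> > 0"
  shows "\<exists>s0>0. \<forall>s. 0 < s \<and> s < s0 \<longrightarrow>
     \<bar>f (x + s *\<^sub>R u + s *\<^sub>R v) - f (x + s *\<^sub>R u) - f (x + s *\<^sub>R v) + f x - s^2 * ((D2 *v v) \<bullet> u)\<bar>
        \<le> \<epsilon> * s^2 * ((2 * norm u + norm v) * norm u)"
proof -
  obtain d where d: "d > 0" and dd: "\<And>y. norm (y - x) < d \<Longrightarrow>
      norm (Df y - Df x - D2 *v (y - x)) \<le> \<epsilon> * norm (y - x)"
    using d2 eps unfolding has_derivative_at_alt by blast
  define s0 where "s0 = min d e / (norm u + norm v + 1)"
  have pos: "0 < norm u + norm v + 1" using norm_ge_zero[of u] norm_ge_zero[of v] by linarith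
  have s0: "s0 > 0" using d e unfolding s0_def by (intro divide_pos_pos) (auto intro: add_nonneg_pos)
  show ?thesis
  proof (intro exI[of _ s0] conjI allI impI s0)
    fix s :: real assume s: "0 < s \<and> s < s0"
    have small: "norm (\<tau> *\<^sub>R u + c *\<^sub>R v) < min d e" if "0 \<le> \<tau>" "\<tau> \<le> s" "0 \<le> c" "c \<le> s" for \<tau> c
    proof -
      have "norm (\<tau> *\<^sub>R u + c *\<^sub>R v) \<le> norm (\<tau> *\<^sub>R u) + norm (c *\<^sub>R v)"
        by (rule norm_triangle_ineq)
      then have "norm (\<tau> *\<^sub>R u + c *\<^sub>R v) \<le> \<tau> * norm u + c * norm v"
        using that by simp
      also have "\<dots> \<le> s * (norm u + norm v + 1)"
      proof -
        have "\<tau> * norm u \<le> s * norm u" "c * norm v \<le> s * norm v"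
          using that by (auto intro!: mult_right_mono)
        then show ?thesis using that by (simp add: distrib_left)
      qed
      also have "\<dots> < s0 * (norm u + norm v + 1)"
        using s pos by (intro mult_strict_right_mono) auto
      also have "\<dots> = min d e" unfolding s0_def using pos by simp
      finally show ?thesis .
    qed
    define m where "m = (\<lambda>\<tau>. f (x + \<tau> *\<^sub>R u + s *\<^sub>R v) - f (x + \<tau> *\<^sub>R u))"
    define m' where "m' = (\<lambda>\<tau>. Df (x + \<tau> *\<^sub>R u + s *\<^sub>R v) \<bullet> u - Df (x + \<tau> *\<^sub>R u) \<bullet> u)"
    have der: "(m has_real_derivative m' \<tau>) (at \<tau>)" if "0 \<le> \<tau>" "\<tau> \<le> s" for \<tau>
    proof -
      have b1: "x + \<tau> *\<^sub>R u + s *\<^sub>R v \<in> ball x e"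
        using small[of \<tau> s] that s by (simp add: dist_shift add.assoc)
      have b2: "x + \<tau> *\<^sub>R u \<in> ball x e"
        using small[of \<tau> 0] that s by (simp add: dist_shift add.assoc)
      have "((\<lambda>\<tau>. x + \<tau> *\<^sub>R u + s *\<^sub>R v) has_derivative (\<lambda>h. h *\<^sub>R u)) (at \<tau>)"
        by (auto intro!: derivative_eq_intros)
      from has_derivative_compose[OF this df[OF b1]]
      have h1: "((\<lambda>\<tau>. f (x + \<tau> *\<^sub>R u + s *\<^sub>R v)) has_derivative (\<lambda>h. h * (Df (x + \<tau> *\<^sub>R u + s *\<^sub>R v) \<bullet> u))) (at \<tau>)"
        by (simp add: o_def mult.commute)
      have "((\<lambda>\<tau>. x + \<tau> *\<^sub>R u) has_derivative (\<lambda>h. h *\<^sub>R u)) (at \<tau>)"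
        by (auto intro!: derivative_eq_intros)
      from has_derivative_compose[OF this df[OF b2]]
      have h2: "((\<lambda>\<tau>. f (x + \<tau> *\<^sub>R u)) has_derivative (\<lambda>h. h * (Df (x + \<tau> *\<^sub>R u) \<bullet> u))) (at \<tau>)"
        by (simp add: o_def mult.commute)
      have "(m has_derivative (\<lambda>h. h * (Df (x + \<tau> *\<^sub>R u + s *\<^sub>R v) \<bullet> u) - h * (Df (x + \<tau> *\<^sub>R u) \<bullet> u))) (at \<tau>)"
        unfolding m_def by (rule has_derivative_diff[OF h1 h2])
      moreover have "\<And>A B. (\<lambda>h::real. h * A - h * B) = (*) (A - B)"
        by (auto simp: fun_eq_iff algebra_simps)
      ultimately show ?thesis unfolding has_field_derivative_def m'_def
        by simp
    qed
    obtain \<xi> where \<xi>: "0 < \<xi>" "\<xi> < s" and mvt: "m s - m 0 = (s - 0) * m' \<xi>"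
      using MVT2[of 0 s m m'] der s by auto
    define y1 where "y1 = x + \<xi> *\<^sub>R u + s *\<^sub>R v"
    define y2 where "y2 = x + \<xi> *\<^sub>R u"
    have n1: "norm (y1 - x) < d" "norm (y1 - x) \<le> s * (norm u + norm v)"
    proof -
      show "norm (y1 - x) < d" using small[of \<xi> s] \<xi> s by (simp add: y1_def algebra_simps)
      have "norm (y1 - x) \<le> norm (\<xi> *\<^sub>R u) + norm (s *\<^sub>R v)" unfolding y1_def
        by (simp add: add.assoc norm_triangle_ineq del: norm_scaleR)
      then have "norm (y1 - x) \<le> \<xi> * norm u + s * norm v"
        using \<xi> s by simp
      also have "\<dots> \<le> s * (norm u + norm v)" using \<xi> by (simp add: distrib_left mult_right_mono)
      finally show "norm (y1 - x) \<le> s * (norm u + norm v)" .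
    qed
    have n2: "norm (y2 - x) < d" "norm (y2 - x) \<le> s * norm u"
    proof -
      show "norm (y2 - x) < d" using small[of \<xi> 0] \<xi> s by (simp add: y2_def algebra_simps)
      show "norm (y2 - x) \<le> s * norm u" using \<xi> by (simp add: y2_def mult_right_mono)
    qed
    have eqv: "Df y1 - Df y2 - s *\<^sub>R (D2 *v v) =
       (Df y1 - Df x - D2 *v (y1 - x)) - (Df y2 - Df x - D2 *v (y2 - x))"
      by (simp add: y1_def y2_def algebra_simps)
    have "norm (Df y1 - Df y2 - s *\<^sub>R (D2 *v v)) \<le> \<epsilon> * norm (y1 - x) + \<epsilon> * norm (y2 - x)"
      unfolding eqv by (rule order_trans[OF norm_triangle_ineq4 add_mono[OF dd[OF n1(1)] dd[OF n2(1)]]])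
    also have "\<dots> \<le> \<epsilon> * (s * (norm u + norm v)) + \<epsilon> * (s * norm u)"
      using n1 n2 eps by (intro add_mono mult_left_mono) auto
    finally have nb: "norm (Df y1 - Df y2 - s *\<^sub>R (D2 *v v)) \<le> \<epsilon> * s * (2 * norm u + norm v)"
      by (simp add: algebra_simps)
    have "\<bar>m' \<xi> - s * ((D2 *v v) \<bullet> u)\<bar> = \<bar>(Df y1 - Df y2 - s *\<^sub>R (D2 *v v)) \<bullet> u\<bar>"
      by (simp add: m'_def y1_def y2_def algebra_simps inner_diff_left)
    also have "\<dots> \<le> norm (Df y1 - Df y2 - s *\<^sub>R (D2 *v v)) * norm u"
      by (rule Cauchy_Schwarz_ineq2)
    also have "\<dots> \<le> \<epsilon> * s * (2 * norm u + norm v) * norm u"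
      by (rule mult_right_mono[OF nb]) simp
    finally have mb: "\<bar>m' \<xi> - s * ((D2 *v v) \<bullet> u)\<bar> \<le> \<epsilon> * s * (2 * norm u + norm v) * norm u" .
    have "f (x + s *\<^sub>R u + s *\<^sub>R v) - f (x + s *\<^sub>R u) - f (x + s *\<^sub>R v) + f x - s^2 * ((D2 *v v) \<bullet> u)
        = s * (m' \<xi> - s * ((D2 *v v) \<bullet> u))"
      using mvt by (simp add: m_def power2_eq_square algebra_simps)
    then have "\<bar>f (x + s *\<^sub>R u + s *\<^sub>R v) - f (x + s *\<^sub>R u) - f (x + s *\<^sub>R v) + f x - s^2 * ((D2 *v v) \<bullet> u)\<bar>
        = s * \<bar>m' \<xi> - s * ((D2 *v v) \<bullet> u)\<bar>" using s by (simp add: abs_mult)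
    also have "\<dots> \<le> s * (\<epsilon> * s * (2 * norm u + norm v) * norm u)"
      using mb s by (intro mult_left_mono) auto
    finally show "\<bar>f (x + s *\<^sub>R u + s *\<^sub>R v) - f (x + s *\<^sub>R u) - f (x + s *\<^sub>R v) + f x - s^2 * ((D2 *v v) \<bullet> u)\<bar>
        \<le> \<epsilon> * s^2 * ((2 * norm u + norm v) * norm u)" by (simp add: power2_eq_square algebra_simps)
  qed
qed

lemma hessian_inner_sym:
  fixes f :: "real^'n \<Rightarrow> real" and Df :: "real^'n \<Rightarrow> real^'n" and D2 :: "real^'n^'n"
  assumes e: "e > 0" and df: "\<And>y. y \<in> ball x e \<Longrightarrow> (f has_derivative (\<lambda>h. Df y \<bullet> h)) (at y)"
    and d2: "(Df has_derivative (\<lambda>h. D2 *v h)) (at x)"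
  shows "(D2 *v v) \<bullet> u = (D2 *v u) \<bullet> v"
proof (rule ccontr)
  define A where "A = (D2 *v v) \<bullet> u"
  define B where "B = (D2 *v u) \<bullet> v"
  assume "\<not> ?thesis"
  then have AB: "\<bar>A - B\<bar> > 0" by (simp add: A_def B_def)
  define C1 where "C1 = (2 * norm u + norm v) * norm u"
  define C2 where "C2 = (2 * norm v + norm u) * norm v"
  have C1: "C1 \<ge> 0" "C2 \<ge> 0" by (simp_all add: C1_def C2_def)
  define \<epsilon> where "\<epsilon> = \<bar>A - B\<bar> / (2 * (C1 + C2 + 1))"
  have eps: "\<epsilon> > 0" using AB C1 unfolding \<epsilon>_def by (intro divide_pos_pos) auto
  obtain s1 where s1: "s1 > 0" and b1: "\<And>s. 0 < s \<and> s < s1 \<Longrightarrow>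
     \<bar>f (x + s *\<^sub>R u + s *\<^sub>R v) - f (x + s *\<^sub>R u) - f (x + s *\<^sub>R v) + f x - s^2 * A\<bar>
        \<le> \<epsilon> * s^2 * C1"
    using schwarz_bound[OF e df d2 eps, of u v] unfolding A_def C1_def by blast
  obtain s2 where s2: "s2 > 0" and b2: "\<And>s. 0 < s \<and> s < s2 \<Longrightarrow>
     \<bar>f (x + s *\<^sub>R v + s *\<^sub>R u) - f (x + s *\<^sub>R v) - f (x + s *\<^sub>R u) + f x - s^2 * B\<bar>
        \<le> \<epsilon> * s^2 * C2"
    using schwarz_bound[OF e df d2 eps, of v u] unfolding B_def C2_def by blast
  define s where "s = min s1 s2 / 2"
  have s: "0 < s" "s < s1" "s < s2" using s1 s2 by (auto simp: s_def)
  have eqq: "x + s *\<^sub>R v + s *\<^sub>R u = x + s *\<^sub>R u + s *\<^sub>R v" by (simp add: algebra_simps)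
  have "\<bar>s^2 * A - s^2 * B\<bar> \<le> \<epsilon> * s^2 * C1 + \<epsilon> * s^2 * C2"
    using b1[of s] b2[of s] s unfolding eqq by linarith
  moreover have "s^2 * \<bar>A - B\<bar> = \<bar>s^2 * A - s^2 * B\<bar>"
    by (simp only: right_diff_distrib[symmetric] abs_mult) simp
  ultimately have "s^2 * \<bar>A - B\<bar> \<le> s^2 * (\<epsilon> * (C1 + C2))"
    by (simp add: algebra_simps)
  then have "\<bar>A - B\<bar> \<le> \<epsilon> * (C1 + C2)" using s by simp
  also have "\<dots> = \<bar>A - B\<bar> * ((C1 + C2) / (2 * (C1 + C2 + 1)))"
    by (simp add: \<epsilon>_def)
  also have "\<dots> < \<bar>A - B\<bar> * 1"
    using AB C1 by (intro mult_strict_left_mono) (simp_all add: field_simps)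
  also have "\<dots> = \<bar>A - B\<bar>" by simp
  finally show False by simp
qed

lemma hessian_sym:
  fixes f :: "real^'n \<Rightarrow> real" and Df :: "real^'n \<Rightarrow> real^'n" and D2 :: "real^'n^'n"
  assumes e: "e > 0" and df: "\<And>y. y \<in> ball x e \<Longrightarrow> (f has_derivative (\<lambda>h. Df y \<bullet> h)) (at y)"
    and d2: "(Df has_derivative (\<lambda>h. D2 *v h)) (at x)"
  shows "sym_mat D2"
proof -
  have "D2 $ i $ j = D2 $ j $ i" for i j
    using hessian_inner_sym[OF e df d2, of "axis j 1" "axis i 1"]
    by (simp add: matrix_vector_mult_basis inner_axis column_def)
  then show ?thesis unfolding sym_mat_def transpose_def by (simp add: vec_eq_iff)
qed

lemma second_order_min:
  fixes g g' :: "real \<Rightarrow> real"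
  assumes d: "d > 0" and gd: "\<And>s. \<bar>s\<bar> < d \<Longrightarrow> (g has_real_derivative g' s) (at s)"
    and mn: "\<And>s. \<bar>s\<bar> < d \<Longrightarrow> g 0 \<le> g s" and g2: "(g' has_real_derivative L) (at 0)"
  shows "0 \<le> L"
proof (rule ccontr)
  assume "\<not> 0 \<le> L" hence L: "L < 0" by simp
  have g0: "g' 0 = 0"
    by (rule DERIV_local_min[OF gd[of 0] d]) (use d mn in auto)
  from g2 have "((\<lambda>h. (g' (0 + h) - g' 0) / h) \<longlongrightarrow> L) (at 0)"
    by (simp add: DERIV_def)
  from order_tendstoD(2)[OF this L]
  obtain e where e: "e > 0" and ee: "\<And>h. h \<noteq> 0 \<and> dist h 0 < e \<Longrightarrow> (g' (0 + h) - g' 0) / h < 0"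
    unfolding eventually_at by blast
  define s where "s = min e d / 2"
  have s: "0 < s" "s < e" "s < d" using e d by (auto simp: s_def)
  obtain \<xi> where \<xi>: "0 < \<xi>" "\<xi> < s" and mv: "g s - g 0 = (s - 0) * g' \<xi>"
    using MVT2[of 0 s g g'] gd s by fastforce
  have "g' \<xi> / \<xi> < 0" using ee[of \<xi>] \<xi> s g0 by simp
  then have "g' \<xi> < 0" using \<xi> by (simp add: divide_less_0_iff)
  then have "s * g' \<xi> < 0" using s by (simp add: mult_pos_neg)
  then have "g s < g 0" using mv by simp
  with mn[of s] s show False by simp
qed

lemma F_deriv:
  fixes r R a b \<mu> :: real
  assumes r: "0 < r" "r < R" and a: "a > 0"
  shows "((\<lambda>r. \<mu> * (1 - (r/R) powr a) powr b) has_real_derivative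
     \<mu> * (b * (1 - (r/R) powr a) powr (b - 1) * (- (a * (r/R) powr (a - 1) / R)))) (at r)"
proof -
  have rr: "0 < r/R" "r/R < 1" using r by auto
  have "(r/R) powr a < 1 powr a" using rr a by (intro powr_less_mono2) auto
  then have u1: "(r/R) powr a < 1" by simp
  show ?thesis
    by (rule derivative_eq_intros refl | use rr u1 r in simp)+
qed

lemma Fd_deriv:
  fixes r R a b \<mu> :: real
  assumes r: "0 < r" "r < R" and a: "a > 0"
  shows "\<exists>F2. ((\<lambda>r. \<mu> * (b * (1 - (r/R) powr a) powr (b - 1) * (- (a * (r/R) powr (a - 1) / R))))
      has_real_derivative F2) (at r)"
proof -
  have rr: "0 < r/R" "r/R < 1" using r by auto
  have "(r/R) powr a < 1 powr a" using rr a by (intro powr_less_mono2) auto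
  then have u1: "(r/R) powr a < 1" by simp
  show ?thesis
    apply (rule exI)
    apply (rule derivative_eq_intros refl | use rr u1 r in simp)+
    done
qed

lemma wt_deriv:
  fixes E \<beta> A t0 :: real
  assumes "1 + t0 / E > 0" "E \<noteq> 0"
  shows "((\<lambda>t. A * (1 + t / E) powr (- \<beta>)) has_real_derivative
           A * (- \<beta> * (1 + t0 / E) powr (- \<beta> - 1) / E)) (at t0)"
  by (rule derivative_eq_intros refl | use assms in simp)+

lemma aux_eq1: "inverse y / 2 * (2 * B + 2 * s * C) = (B + s * C) / (y::real)"
  by (cases "y = 0") (simp_all add: field_simps)

lemma aux_eq2: "F2 * (B / y) * (B / y) + Fd * ((C - B^2/A) / y) = F2 * (B / y)^2 + Fd * ((C - B^2/A) / (y::real))"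
  by (simp add: power2_eq_square)

lemma sqrt_q_deriv:
  fixes A B C s :: real
  assumes Q: "0 < A + 2 * s * B + s ^ 2 * C"
  shows "((\<lambda>s. sqrt (A + 2 * s * B + s ^ 2 * C)) has_real_derivative (B + s * C) / sqrt (A + 2 * s * B + s ^ 2 * C)) (at s)"
proof -
  have d: "((\<lambda>s. A + 2 * s * B + s ^ 2 * C) has_real_derivative 2 * B + 2 * s * C) (at s)"
    apply (rule derivative_eq_intros refl)+
    apply simp
    done
  from DERIV_chain2[OF DERIV_real_sqrt[OF Q] d]
  show ?thesis by (rule DERIV_cong) (rule aux_eq1)
qed

lemma comp_deriv:
  fixes F Fd :: "real \<Rightarrow> real" and A B C R s :: real
  assumes q: "0 < sqrt (A + 2 * s * B + s ^ 2 * C)" "sqrt (A + 2 * s * B + s ^ 2 * C) < R"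
    and F: "\<And>\<rho>. 0 < \<rho> \<Longrightarrow> \<rho> < R \<Longrightarrow> (F has_real_derivative Fd \<rho>) (at \<rho>)"
  shows "((\<lambda>s. F (sqrt (A + 2 * s * B + s ^ 2 * C))) has_real_derivative
     Fd (sqrt (A + 2 * s * B + s ^ 2 * C)) * ((B + s * C) / sqrt (A + 2 * s * B + s ^ 2 * C))) (at s)"
proof -
  have Q: "0 < A + 2 * s * B + s ^ 2 * C" using q(1) by simp
  from DERIV_chain2[OF F[OF q] sqrt_q_deriv[OF Q]] show ?thesis .
qed

lemma comp_deriv2:
  fixes Fd :: "real \<Rightarrow> real" and A B C F2 :: real
  assumes A: "A > 0" and F2: "(Fd has_real_derivative F2) (at (sqrt A))"
  shows "((\<lambda>s. Fd (sqrt (A + 2 * s * B + s ^ 2 * C)) * ((B + s * C) / sqrt (A + 2 * s * B + s ^ 2 * C)))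
      has_real_derivative (F2 * (B / sqrt A)^2 + Fd (sqrt A) * ((C - B^2/A) / sqrt A))) (at 0)"
proof -
  have s0: "sqrt (A + 2 * 0 * B + 0 ^ 2 * C) = sqrt A" by simp
  have b0: "B + 0 * C = B" by simp
  have d1: "((\<lambda>s. sqrt (A + 2 * s * B + s ^ 2 * C)) has_real_derivative B / sqrt A) (at 0)"
    using sqrt_q_deriv[of A 0 B C] A by simp
  have dl: "((\<lambda>s. B + s * C) has_real_derivative C) (at 0)"
    apply (rule derivative_eq_intros refl)+
    apply simp
    done
  have sA: "sqrt A > 0" using A by simp
  have d2: "((\<lambda>s. (B + s * C) / sqrt (A + 2 * s * B + s ^ 2 * C)) has_real_derivative (C - B^2/A) / sqrt A) (at 0)"
  proof -
    from DERIV_divide[OF dl d1] sA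
    have "((\<lambda>s. (B + s * C) / sqrt (A + 2 * s * B + s ^ 2 * C)) has_real_derivative
       (C * sqrt A - B * (B / sqrt A)) / (sqrt A * sqrt A)) (at 0)" by simp
    moreover have "(C * sqrt A - B * (B / sqrt A)) / (sqrt A * sqrt A) = (C - B^2/A) / sqrt A"
    proof -
      obtain S where S: "S = sqrt A" by blast
      have SA: "A = S * S" "S > 0" using S A sA by auto
      show ?thesis unfolding S[symmetric] SA(1) using SA(2) by (simp add: field_simps power2_eq_square)
    qed
    ultimately show ?thesis by (rule DERIV_cong)
  qed
  have d3: "((\<lambda>s. Fd (sqrt (A + 2 * s * B + s ^ 2 * C))) has_real_derivative F2 * (B / sqrt A)) (at 0)"
    using DERIV_chain2[of Fd F2 "\<lambda>s. sqrt (A + 2 * s * B + s ^ 2 * C)" 0, OF _ d1] F2 by simp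
  from DERIV_mult[OF d3 d2] show ?thesis
    apply (rule DERIV_cong)
    apply (simp only: s0 b0)
    apply (simp only: power2_eq_square mult.commute[of "(C - B*B/A) / sqrt A"])
    done
qed

lemma line_deriv1:
  fixes f :: "real^'n \<Rightarrow> real"
  assumes "(f has_derivative (\<lambda>h. Df \<bullet> h)) (at (x + s *\<^sub>R v))"
  shows "((\<lambda>s. f (x + s *\<^sub>R v)) has_real_derivative (Df \<bullet> v)) (at s)"
proof -
  have "((\<lambda>s. x + s *\<^sub>R v) has_derivative (\<lambda>h. h *\<^sub>R v)) (at s)"
    by (auto intro!: derivative_eq_intros)
  from has_derivative_compose[OF this assms]
  have "((\<lambda>s. f (x + s *\<^sub>R v)) has_derivative (\<lambda>h. h * (Df \<bullet> v))) (at s)"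
    by (simp add: o_def mult.commute)
  then show ?thesis by (simp add: has_field_derivative_def mult.commute[of _ "Df \<bullet> v"])
qed

lemma line_deriv2:
  fixes G :: "real^'n \<Rightarrow> real^'n"
  assumes "(G has_derivative (\<lambda>h. M *v h)) (at x)"
  shows "((\<lambda>s. G (x + s *\<^sub>R v) \<bullet> v) has_real_derivative ((M *v v) \<bullet> v)) (at 0)"
proof -
  have "((\<lambda>s. x + s *\<^sub>R v) has_derivative (\<lambda>h. h *\<^sub>R v)) (at 0)"
    by (auto intro!: derivative_eq_intros)
  from has_derivative_compose[OF this] assms
  have "((\<lambda>s. G (x + s *\<^sub>R v)) has_derivative (\<lambda>h. M *v (h *\<^sub>R v))) (at 0)"
    by (simp add: o_def)
  then have "((\<lambda>s. G (x + s *\<^sub>R v) \<bullet> v) has_derivative (\<lambda>h. (M *v (h *\<^sub>R v)) \<bullet> v)) (at 0)"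
    by (rule has_derivative_inner_left)
  moreover have "(\<lambda>h. (M *v (h *\<^sub>R v)) \<bullet> v) = (*) ((M *v v) \<bullet> v)"
    by (rule ext) (simp add: matrix_vector_mult_scaleR)
  ultimately show ?thesis
    by (simp add: has_field_derivative_def)
qed

lemma outer_mult: "outer e *v v = (e \<bullet> v) *\<^sub>R (e :: real^'n)"
  by (simp add: vec_eq_iff outer_def matrix_vector_mult_def inner_vec_def sum_distrib_left[symmetric] mult.assoc)

lemma pow_bound:
  fixes u b :: real and n :: nat
  assumes u: "0 \<le> u" "u \<le> 1" and b: "0 < b" "b \<le> real n"
  shows "1 - (1 - u) powr b \<le> real n * u"
proof (cases "u = 1")
  case True
  have "1 \<le> real n" using b by (cases n) auto
  then show ?thesis using True by simp
next
  case False
  then have u1: "0 < 1 - u" "1 - u \<le> 1" using u by auto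
  have "(1 - u) powr (real n) \<le> (1 - u) powr b" by (rule powr_mono') (use b u1 in auto)
  moreover have "(1 - u) powr (real n) = (1 - u) ^ n" using u1 by (simp add: powr_realpow)
  moreover have "1 + real n * (- u) \<le> (1 + (- u)) ^ n" using u by (intro Bernoulli_inequality) auto
  ultimately show ?thesis by simp
qed

lemma usc_of_cont:
  assumes "continuous_on S f" shows "usc_on f S"
  unfolding usc_on_def
proof (intro ballI allI impI)
  fix p \<epsilon> assume p: "p \<in> S" and e: "(\<epsilon>::real) > 0"
  from assms[unfolded continuous_on_iff] p e obtain \<delta> where "\<delta> > 0" "\<forall>q\<in>S. dist q p < \<delta> \<longrightarrow> dist (f q) (f p) < \<epsilon>"
    by blast
  then show "\<exists>\<delta>>0. \<forall>q\<in>S. dist q p < \<delta> \<longrightarrow> f q < f p + \<epsilon>"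
    unfolding dist_real_def abs_less_iff by (metis add.commute diff_less_eq)
qed

lemma outer_cont: "continuous_on S (\<lambda>e::real^'n. l *\<^sub>R outer e - mat 1)"
  unfolding outer_def by (intro continuous_intros)

lemma sym_outer: "sym_mat (l *\<^sub>R outer e - mat 1)"
  by (simp add: sym_mat_def vec_eq_iff transpose_def outer_def mat_def mult.commute)

lemma inner_bdd:
  fixes H :: "real^'n \<Rightarrow> real^'n^'n \<Rightarrow> real"
  assumes Hcont: "continuous_on (UNIV \<times> {X. sym_mat X}) (\<lambda>(q,X). H q X)"
  shows "bdd_below ((\<lambda>e. H e (l *\<^sub>R outer e - mat 1)) ` sphere 0 1)"
proof -
  have c: "continuous_on (sphere 0 1) (\<lambda>e. (\<lambda>(q,X). H q X) (e, l *\<^sub>R outer e - mat 1))"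
    by (rule continuous_on_compose2[OF Hcont]) (auto intro!: continuous_intros outer_cont simp: sym_outer)
  have "compact ((\<lambda>e. H e (l *\<^sub>R outer e - mat 1)) ` sphere 0 1)"
    using compact_continuous_image[OF c] by simp
  then show ?thesis by (intro bounded_imp_bdd_below compact_imp_bounded)
qed

lemma center_deriv:
  fixes \<mu> R a b P nv :: real and n :: nat
  assumes R: "R > 0" and a: "a > 1" and b: "0 < b" "b \<le> real n" and nv: "nv \<ge> 0"
  shows "((\<lambda>s. \<mu> * (1 - (\<bar>s\<bar> * nv / R) powr a) powr b / P) has_real_derivative 0) (at 0)"
proof -
  define h where "h = (\<lambda>s. \<mu> * (1 - (\<bar>s\<bar> * nv / R) powr a) powr b / P)"
  define K where "K = \<bar>\<mu> / P\<bar> * real n * (nv / R) powr a"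
  have h0: "h 0 = \<mu> / P" by (simp add: h_def)
  have bnd: "\<bar>(h (0 + y) - h 0) / y\<bar> \<le> K * \<bar>y\<bar> powr (a - 1)" if y: "y \<noteq> 0" "\<bar>y\<bar> < R / (nv + 1)" for y
  proof -
    define u where "u = (\<bar>y\<bar> * nv / R) powr a"
    have yn: "\<bar>y\<bar> * nv \<le> R"
    proof -
      have "\<bar>y\<bar> * nv \<le> \<bar>y\<bar> * (nv + 1)" by (simp add: mult_left_mono)
      also have "\<dots> < R" using y(2) nv by (simp add: field_simps)
      finally show ?thesis by simp
    qed
    have u0: "0 \<le> u" by (simp add: u_def)
    have u1: "u \<le> 1"
    proof -
      have "\<bar>y\<bar> * nv / R \<le> 1" using yn R by simp
      then have "(\<bar>y\<bar> * nv / R) powr a \<le> 1 powr a" using a nv R by (intro powr_mono2) auto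
      then show ?thesis by (simp add: u_def)
    qed
    have le1: "(1 - u) powr b \<le> 1"
    proof -
      have "(1 - u) powr b \<le> (1 - u) powr 0" by (rule powr_mono') (use b u0 u1 in auto)
      also have "\<dots> \<le> 1" by simp
      finally show ?thesis .
    qed
    have ub: "1 - (1 - u) powr b \<le> real n * u" by (rule pow_bound[OF u0 u1 b])
    have "h (0 + y) - h 0 = (\<mu> / P) * ((1 - u) powr b - 1)" by (simp add: h_def u_def right_diff_distrib)
    then have "\<bar>h (0 + y) - h 0\<bar> = \<bar>\<mu> / P\<bar> * (1 - (1 - u) powr b)" using le1 by (simp add: abs_mult)
    also have "\<dots> \<le> \<bar>\<mu> / P\<bar> * (real n * u)" by (intro mult_left_mono ub) simp
    also have "u = \<bar>y\<bar> powr a * (nv / R) powr a" unfolding u_def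
      by (simp add: powr_mult[symmetric])
    finally have "\<bar>h (0 + y) - h 0\<bar> \<le> K * \<bar>y\<bar> powr a" by (simp add: K_def mult_ac)
    then have "\<bar>(h (0 + y) - h 0) / y\<bar> \<le> K * (\<bar>y\<bar> powr a / \<bar>y\<bar>)" using y by (simp add: abs_divide divide_right_mono)
    also have "K * (\<bar>y\<bar> powr a / \<bar>y\<bar>) = K * \<bar>y\<bar> powr (a - 1)" using y by (simp add: powr_diff)
    finally show ?thesis by simp
  qed
  have ev: "eventually (\<lambda>y. norm ((h (0 + y) - h 0) / y) \<le> K * \<bar>y\<bar> powr (a - 1)) (at 0)"
    unfolding eventually_at
  proof (intro exI[of _ "R / (nv + 1)"] conjI allI ballI impI)
    show "R / (nv + 1) > 0" using R nv by simp
    fix y :: real assume "y \<noteq> 0 \<and> dist y 0 < R / (nv + 1)"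
    then have "y \<noteq> 0" "\<bar>y\<bar> < R / (nv + 1)" by (auto simp: dist_real_def)
    from bnd[OF this] show "norm ((h (0 + y) - h 0) / y) \<le> K * \<bar>y\<bar> powr (a - 1)" by simp
  qed
  have "((\<lambda>y. \<bar>y\<bar> powr (a - 1)) \<longlongrightarrow> 0) (at 0)"
    by (rule tendsto_zero_powrI) (auto intro!: tendsto_eq_intros simp: a)
  then have "((\<lambda>y. K * \<bar>y\<bar> powr (a - 1)) \<longlongrightarrow> 0) (at 0)"
    by (rule tendsto_mult_right_zero)
  from Lim_null_comparison[OF ev this]
  show ?thesis unfolding h_def[symmetric] DERIV_def .
qed

lemma dist_line:
  fixes x0 z v :: "real^'n"
  shows "dist (x0 + s *\<^sub>R v) z = sqrt (((x0 - z) \<bullet> (x0 - z)) + 2 * s * ((x0 - z) \<bullet> v) + s ^ 2 * (v \<bullet> v))"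
proof -
  have "dist (x0 + s *\<^sub>R v) z = norm ((x0 - z) + s *\<^sub>R v)" by (simp add: dist_norm algebra_simps)
  also have "\<dots> = sqrt (((x0 - z) + s *\<^sub>R v) \<bullet> ((x0 - z) + s *\<^sub>R v))" by (rule norm_eq_sqrt_inner)
  also have "((x0 - z) + s *\<^sub>R v) \<bullet> ((x0 - z) + s *\<^sub>R v) = ((x0 - z) \<bullet> (x0 - z)) + 2 * s * ((x0 - z) \<bullet> v) + s ^ 2 * (v \<bullet> v)"
    by (simp add: inner_add_left inner_add_right inner_commute power2_eq_square algebra_simps)
  finally show ?thesis .
qed

lemma vec_eq_by_inner:
  fixes x y :: "'a::real_inner"
  assumes "\<And>v. x \<bullet> v = y \<bullet> v"
  shows "x = y"
proof -
  have "(x - y) \<bullet> (x - y) = 0" using assms[of "x - y"] by (simp add: inner_diff_left)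
  then show ?thesis by simp
qed

lemma sym_M: "sym_mat (\<alpha> *\<^sub>R outer e + \<gamma> *\<^sub>R (mat 1 - outer (e::real^'n)))"
  by (simp add: sym_mat_def vec_eq_iff transpose_def outer_def mat_def mult.commute)

lemma M_form:
  assumes "\<theta> \<noteq> 0"
  shows "\<alpha> *\<^sub>R outer e + (- \<theta>) *\<^sub>R (mat 1 - outer (e::real^'n)) = \<theta> *\<^sub>R ((\<alpha> / \<theta> + 1) *\<^sub>R outer e - mat 1)"
  using assms by (simp add: vec_eq_iff outer_def mat_def field_simps)

lemma quad_M:
  "v \<bullet> ((\<alpha> *\<^sub>R outer e + \<gamma> *\<^sub>R (mat 1 - outer e)) *v v) = \<alpha> * (e \<bullet> v)^2 + \<gamma> * (v \<bullet> v - (e \<bullet> v)^2)"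
  for e v :: "real^'n"
  by (simp add: matrix_vector_mult_add_rdistrib matrix_vector_mult_diff_rdistrib
      scaleR_matrix_vector_assoc[symmetric] outer_mult inner_add_right inner_diff_right
      power2_eq_square inner_commute)

theorem mainTheorem10:
  fixes H :: "real^'n \<Rightarrow> real^'n^'n \<Rightarrow> real"
    and k1 k \<mu> R N c E :: real and z :: "real^'n"
    and w :: "real^'n \<Rightarrow> real \<Rightarrow> real"
  assumes Hcont: "continuous_on (UNIV \<times> {X. sym_mat X}) (\<lambda>(q,X). H q X)"
    and A: "condA H" and B: "condB H k1" and C: "condC H"
    and k_def: "k = k1 + 1" and k_gt: "k > 1"
    and N_def: "N = (INF l. INF e\<in>sphere 0 1. H e (l *\<^sub>R outer e - mat 1))"
    and N_fin: "bdd_below (range (\<lambda>l. INF e\<in>sphere 0 1. H e (l *\<^sub>R outer e - mat 1)))"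
    and N_neg: "N < 0"
    and mu_pos: "\<mu> > 0" and R_pos: "R > 0"
    and c_def: "c = ((k + 1) / (k - 1)) powr k"
    and E_def: "E = R powr (k + 1) / (c * \<mu> powr (k - 1) * (k - 1) * \<bar>N\<bar>)"
    and w_def: "\<And>x t. w x t =
        \<mu> * (1 - (dist x z / R) powr ((k + 1) / k)) powr (k / (k - 1))
          / (1 + t / E) powr (1 / (k - 1))"
  shows "(\<forall>x\<in>cball z R. \<forall>t\<ge>0. w x t \<ge> 0)
       \<and> (\<forall>x t. dist x z = R \<longrightarrow> w x t = 0)
       \<and> (\<forall>t. w z t = \<mu> * (1 + t / E) powr (- 1 / (k - 1)))
       \<and> (\<forall>T>0. visc_subsol H w (ball z R) T)"
proof -
  define a where "a = (k + 1) / k"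
  define b where "b = k / (k - 1)"
  define \<beta> where "\<beta> = 1 / (k - 1)"
  define F where "F = (\<lambda>r. \<mu> * (1 - (r / R) powr a) powr b)"
  define Fd where "Fd = (\<lambda>r. \<mu> * (b * (1 - (r/R) powr a) powr (b - 1) * (- (a * (r/R) powr (a - 1) / R))))"
  have k1: "k1 = k - 1" using k_def by simp
  have a1: "a > 1" using k_gt by (simp add: a_def field_simps)
  have a0: "a > 0" using a1 by simp
  have b0: "b > 0" using k_gt by (simp add: b_def)
  have \<beta>0: "\<beta> > 0" using k_gt by (simp add: \<beta>_def)
  have Nabs: "\<bar>N\<bar> = - N" "\<bar>N\<bar> > 0" using N_neg by auto
  have cpos: "c > 0" using k_gt by (simp add: c_def)
  have Epos: "E > 0" using k_gt cpos mu_pos R_pos Nabs unfolding E_def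
    by (intro divide_pos_pos mult_pos_pos) auto
  have w_eq: "w x t = F (dist x z) * (1 + t / E) powr (- \<beta>)" for x t
    by (simp add: w_def F_def a_def b_def \<beta>_def powr_minus divide_inverse)
  have part1: "\<forall>x\<in>cball z R. \<forall>t\<ge>0. w x t \<ge> 0"
    using mu_pos by (simp add: w_def)
  have part2: "\<forall>x t. dist x z = R \<longrightarrow> w x t = 0"
    using R_pos k_gt by (simp add: w_def)
  have part3: "\<forall>t. w z t = \<mu> * (1 + t / E) powr (- 1 / (k - 1))"
  proof
    fix t
    have m: "- 1 / (k - 1) = - (1 / (k - 1))" by simp
    show "w z t = \<mu> * (1 + t / E) powr (- 1 / (k - 1))"
      unfolding m using k_gt by (simp add: w_def powr_minus divide_inverse)
  qed
  have part4: "visc_subsol H w (ball z R) T" if T: "T > 0" for T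
  proof -
    define S where "S = ball z R \<times> {0<..<T}"
    have cont_in: "continuous_on S (\<lambda>p. (dist (fst p) z / R) powr a)"
      by (rule continuous_on_powr') (use a0 R_pos in \<open>auto intro!: continuous_intros\<close>)
    have lt1: "(dist x z / R) powr a < 1" if "dist x z < R" for x
    proof -
      have "(dist x z / R) powr a < 1 powr a" using that R_pos a0 by (intro powr_less_mono2) auto
      then show ?thesis by simp
    qed
    have c1: "continuous_on S (\<lambda>p. 1 - (dist (fst p) z / R) powr a)"
      by (rule continuous_on_diff[OF continuous_on_const cont_in])
    have c2: "continuous_on S (\<lambda>p. (1 - (dist (fst p) z / R) powr a) powr b)"
    proof (rule continuous_on_powr[OF c1 continuous_on_const])
      show "\<forall>x\<in>S. 1 - (dist (fst x) z / R) powr a \<noteq> 0"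
      proof
        fix p assume "p \<in> S"
        then have "dist (fst p) z < R" by (auto simp: S_def dist_commute)
        from lt1[OF this] show "1 - (dist (fst p) z / R) powr a \<noteq> 0" by simp
      qed
    qed
    have c3: "continuous_on S (\<lambda>p. (1 + snd p / E) powr (- \<beta>))"
    proof (rule continuous_on_powr)
      show "continuous_on S (\<lambda>p. 1 + snd p / E)" using Epos by (auto intro!: continuous_intros)
      show "continuous_on S (\<lambda>p. - \<beta>)" by (rule continuous_on_const)
      show "\<forall>x\<in>S. 1 + snd x / E \<noteq> 0"
      proof
        fix p assume "p \<in> S"
        then have "snd p > 0" by (auto simp: S_def)
        then have "snd p / E > 0" using Epos by simp
        then show "1 + snd p / E \<noteq> 0" by linarith
      qed
    qed
    have cont: "continuous_on S (\<lambda>p. \<mu> * (1 - (dist (fst p) z / R) powr a) powr b * (1 + snd p / E) powr (- \<beta>))"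
      by (rule continuous_on_mult[OF continuous_on_mult[OF continuous_on_const c2] c3])
    have usc: "usc_on (\<lambda>(x, t). w x t) S"
      by (rule usc_of_cont) (use cont in \<open>simp add: w_eq F_def case_prod_beta'\<close>)
    have sub: "H (Dphi x0 t0) (D2phi x0 t0) - phit x0 t0 \<ge> 0"
      if x0: "x0 \<in> ball z R" and t0: "t0 \<in> {0<..<T}" and inU0: "(x0, t0) \<in> U"
        and tf: "test_fun phi Dphi D2phi phit U"
        and mx: "\<forall>(x,t)\<in>U \<inter> (ball z R \<times> {0<..<T}). w x t - phi x t \<le> w x0 t0 - phi x0 t0"
      for x0 t0 phi Dphi D2phi phit U
    proof -
      have oU: "open U" and der: "\<And>x t. (x,t) \<in> U \<Longrightarrow> ((\<lambda>y. phi y t) has_derivative (\<lambda>h. Dphi x t \<bullet> h)) (at x) \<and>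
                ((\<lambda>y. Dphi y t) has_derivative (\<lambda>h. D2phi x t *v h)) (at x) \<and>
                ((\<lambda>s. phi x s) has_real_derivative phit x t) (at t)"
        using tf unfolding test_fun_def by auto
      obtain e0 where e0: "e0 > 0" "ball (x0, t0) e0 \<subseteq> U" using openE[OF oU inU0] by blast
      have r0R: "dist x0 z < R" using x0 by (simp add: dist_commute)
      have t0b: "0 < t0" "t0 < T" using t0 by auto
      define \<delta> where "\<delta> = min (min (e0/2) t0) (min (T - t0) (R - dist x0 z))"
      have \<delta>: "\<delta> > 0" using e0 t0b r0R by (simp add: \<delta>_def)
      have \<delta>le: "\<delta> \<le> e0/2" "\<delta> \<le> t0" "\<delta> \<le> T - t0" "\<delta> \<le> R - dist x0 z" unfolding \<delta>_def by (auto simp: min_def)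
      have inU: "(x, t) \<in> U" if "dist x x0 < \<delta>" "\<bar>t - t0\<bar> < \<delta>" for x t
      proof -
        have "dist (x, t) (x0, t0) = norm (x - x0, t - t0)" by (simp add: dist_norm)
        also have "\<dots> \<le> norm (x - x0) + norm (t - t0)" by (rule norm_Pair_le)
        also have "\<dots> < e0" using that \<delta>le by (simp add: dist_norm)
        finally have "(x, t) \<in> ball (x0, t0) e0" by (simp add: dist_commute)
        then show ?thesis using e0(2) by blast
      qed
      have inD: "x \<in> ball z R \<and> t \<in> {0<..<T}" if "dist x x0 < \<delta>" "\<bar>t - t0\<bar> < \<delta>" for x t
      proof -
        have "dist z x \<le> dist z x0 + dist x0 x" by (rule dist_triangle)
        then have "dist z x < R" using that \<delta>le by (simp add: dist_commute)
        moreover have "0 < t" "t < T" using that \<delta>le by (auto simp: abs_less_iff)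
        ultimately show ?thesis by simp
      qed
      have mx': "w x t - phi x t \<le> w x0 t0 - phi x0 t0" if "dist x x0 < \<delta>" "\<bar>t - t0\<bar> < \<delta>" for x t
        using mx inU[OF that] inD[OF that] by auto
      have dphi: "((\<lambda>y. phi y t0) has_derivative (\<lambda>h. Dphi y t0 \<bullet> h)) (at y)" if "y \<in> ball x0 \<delta>" for y
      proof -
        have "(y, t0) \<in> U" by (rule inU) (use that \<delta> in \<open>auto simp: dist_commute\<close>)
        from der[OF this] show ?thesis by simp
      qed
      have d2: "((\<lambda>y. Dphi y t0) has_derivative (\<lambda>h. D2phi x0 t0 *v h)) (at x0)"
        using der[OF inU0] by simp
      have dt: "((\<lambda>s. phi x0 s) has_real_derivative phit x0 t0) (at t0)"
        using der[OF inU0] by simp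
      have symD2: "sym_mat (D2phi x0 t0)" by (rule hessian_sym[OF \<delta> dphi d2])
      define L0 where "L0 = 1 + t0 / E"
      have L0: "L0 > 0" using Epos t0b by (simp add: L0_def add_pos_pos)
      define G0 where "G0 = L0 powr (- \<beta>)"
      have G0: "G0 > 0" using L0 by (simp add: G0_def)
      define wt where "wt = F (dist x0 z) * (- \<beta> * L0 powr (- \<beta> - 1) / E)"
      have wtd: "((\<lambda>t. w x0 t) has_real_derivative wt) (at t0)"
        unfolding w_eq wt_def L0_def by (rule wt_deriv) (use L0 Epos in \<open>auto simp: L0_def\<close>)
      have phit_eq: "phit x0 t0 = wt"
      proof -
        have "phit x0 t0 - wt = 0"
        proof (rule DERIV_local_min[OF DERIV_diff[OF dt wtd] \<delta>])
          show "\<forall>y. \<bar>t0 - y\<bar> < \<delta> \<longrightarrow> phi x0 t0 - w x0 t0 \<le> phi x0 y - w x0 y"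
          proof (intro allI impI)
            fix y assume "\<bar>t0 - y\<bar> < \<delta>"
            then have "\<bar>y - t0\<bar> < \<delta>" by (simp add: abs_minus_commute)
            from mx'[OF _ this, of x0] \<delta> show "phi x0 t0 - w x0 t0 \<le> phi x0 y - w x0 y" by simp
          qed
        qed
        then show ?thesis by simp
      qed
      have wx: "w x t0 = F (dist x z) * G0" for x by (simp add: w_eq G0_def L0_def)
      show ?thesis
      proof (cases "x0 = z")
        case True
        define n where "n = nat \<lceil>b\<rceil>"
        have bn: "b \<le> real n" unfolding n_def by (rule real_nat_ceiling_ge)
        have Dz: "Dphi x0 t0 \<bullet> v = 0" for v
        proof -
          define d where "d = \<delta> / (norm v + 1)"
          have nv1: "norm v + 1 > 0" using norm_ge_zero[of v] by linarith
          have d: "d > 0" using \<delta> nv1 unfolding d_def by (rule divide_pos_pos)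
          have hsmall: "dist (x0 + s *\<^sub>R v) x0 < \<delta>" if "\<bar>s\<bar> < d" for s
          proof -
            have "dist (x0 + s *\<^sub>R v) x0 = \<bar>s\<bar> * norm v" by (simp add: dist_norm)
            also have "\<dots> \<le> \<bar>s\<bar> * (norm v + 1)" by (rule mult_left_mono) auto
            also have "\<dots> < d * (norm v + 1)" using that nv1 by (rule mult_strict_right_mono)
            also have "\<dots> = \<delta>" using nv1 by (simp add: d_def)
            finally show ?thesis .
          qed
          have hd: "((\<lambda>s. w (x0 + s *\<^sub>R v) t0) has_real_derivative 0) (at 0)"
          proof -
            have "(\<lambda>s. w (x0 + s *\<^sub>R v) t0) = (\<lambda>s. \<mu> * (1 - (\<bar>s\<bar> * norm v / R) powr ((k + 1) / k)) powr (k / (k - 1))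
                / (1 + t0 / E) powr (1 / (k - 1)))"
              using True by (simp add: w_def fun_eq_iff dist_norm)
            moreover have "((\<lambda>s. \<mu> * (1 - (\<bar>s\<bar> * norm v / R) powr ((k + 1) / k)) powr (k / (k - 1))
                / (1 + t0 / E) powr (1 / (k - 1))) has_real_derivative 0) (at 0)"
              by (rule center_deriv[OF R_pos _ _ bn[unfolded b_def]]) (use a1 b0 in \<open>auto simp: a_def b_def\<close>)
            ultimately show ?thesis by simp
          qed
          have pd: "((\<lambda>s. phi (x0 + s *\<^sub>R v) t0) has_real_derivative (Dphi x0 t0 \<bullet> v)) (at 0)"
            using line_deriv1[of "\<lambda>y. phi y t0" "Dphi x0 t0" x0 0 v] dphi[of x0] \<delta> by simp
          have "Dphi x0 t0 \<bullet> v - 0 = 0"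
          proof (rule DERIV_local_min[OF DERIV_diff[OF pd hd] d])
            show "\<forall>y. \<bar>0 - y\<bar> < d \<longrightarrow> phi (x0 + 0 *\<^sub>R v) t0 - w (x0 + 0 *\<^sub>R v) t0 \<le> phi (x0 + y *\<^sub>R v) t0 - w (x0 + y *\<^sub>R v) t0"
            proof (intro allI impI)
              fix y assume "\<bar>0 - y\<bar> < d"
              then have "\<bar>y\<bar> < d" by simp
              have "w (x0 + y *\<^sub>R v) t0 - phi (x0 + y *\<^sub>R v) t0 \<le> w x0 t0 - phi x0 t0"
                by (rule mx'[OF hsmall[OF \<open>\<bar>y\<bar> < d\<close>]]) (use \<delta> in simp)
              then show "phi (x0 + 0 *\<^sub>R v) t0 - w (x0 + 0 *\<^sub>R v) t0 \<le> phi (x0 + y *\<^sub>R v) t0 - w (x0 + y *\<^sub>R v) t0"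
                by simp
            qed
          qed
          then show ?thesis by simp
        qed
        have D0: "Dphi x0 t0 = 0" using Dz[of "Dphi x0 t0"] by simp
        have H0: "H 0 X = 0" if "sym_mat X" for X
        proof -
          have "H ((0::real) *\<^sub>R (0::real^'n)) X = \<bar>0::real\<bar> powr k1 * H 0 X"
            using B that unfolding condB_def by blast
          then show ?thesis by simp
        qed
        have wt0: "0 \<le> \<mu> * (\<beta> * L0 powr (- \<beta> - 1) / E)"
          using mu_pos \<beta>0 Epos by (intro mult_nonneg_nonneg divide_nonneg_pos) auto
        have "wt = - (\<mu> * (\<beta> * L0 powr (- \<beta> - 1) / E))"
          unfolding wt_def using True R_pos a0 by (simp add: F_def)
        then have "wt \<le> 0" using wt0 by simp
        then show ?thesis using H0[OF symD2] D0 phit_eq by simp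
      next
        case False
        define r0 where "r0 = dist x0 z"
        have r0: "0 < r0" "r0 < R" using False r0R by (auto simp: r0_def)
        define dd where "dd = x0 - z"
        define e where "e = (1 / r0) *\<^sub>R dd"
        have ddn: "norm dd = r0" by (simp add: dd_def r0_def dist_norm)
        have sqA: "sqrt (dd \<bullet> dd) = r0" using ddn by (simp add: norm_eq_sqrt_inner)
        have Ad: "dd \<bullet> dd = r0^2" using ddn by (metis power2_norm_eq_inner)
        have en: "norm e = 1" using r0 ddn by (simp add: e_def)
        obtain F2 where F2: "(Fd has_real_derivative F2) (at r0)"
          using Fd_deriv[OF r0 a0, where \<mu>=\<mu> and b=b] unfolding Fd_def by blast
        have F2': "(Fd has_real_derivative F2) (at (sqrt (dd \<bullet> dd)))" using F2 sqA by simp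
        have Fder: "(F has_real_derivative Fd \<rho>) (at \<rho>)" if "0 < \<rho>" "\<rho> < R" for \<rho>
          unfolding F_def Fd_def by (rule F_deriv[OF that a0])
        define q where "q = Fd r0 * G0"
        have vfacts: "Dphi x0 t0 \<bullet> v = (q / r0) * (dd \<bullet> v) \<and>
           G0 * (F2 * ((dd \<bullet> v) / r0)^2 + Fd r0 * (((v \<bullet> v) - (dd \<bullet> v)^2 / r0^2) / r0)) \<le> (D2phi x0 t0 *v v) \<bullet> v" for v
        proof -
          define Bv where "Bv = dd \<bullet> v"
          define Cv where "Cv = v \<bullet> v"
          define Q where "Q = (\<lambda>s. dd \<bullet> dd + 2 * s * Bv + s ^ 2 * Cv)"
          have distQ: "dist (x0 + s *\<^sub>R v) z = sqrt (Q s)" for s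
            using dist_line[of x0 s v z] by (simp add: Q_def Bv_def Cv_def dd_def)
          define d where "d = min \<delta> (min r0 (R - r0)) / (norm v + 1)"
          have nv1: "norm v + 1 > 0" using norm_ge_zero[of v] by linarith
          have mpos: "min \<delta> (min r0 (R - r0)) > 0" using \<delta> r0 by simp
          have d: "d > 0" using mpos nv1 unfolding d_def by (rule divide_pos_pos)
          have sv: "\<bar>s\<bar> * norm v < min \<delta> (min r0 (R - r0))" if "\<bar>s\<bar> < d" for s
          proof -
            have "\<bar>s\<bar> * norm v \<le> \<bar>s\<bar> * (norm v + 1)" by (rule mult_left_mono) auto
            also have "\<dots> < d * (norm v + 1)" using that nv1 by (rule mult_strict_right_mono)
            also have "\<dots> = min \<delta> (min r0 (R - r0))" using nv1 by (simp add: d_def)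
            finally show ?thesis .
          qed
          have near: "dist (x0 + s *\<^sub>R v) x0 < \<delta> \<and> 0 < sqrt (Q s) \<and> sqrt (Q s) < R" if "\<bar>s\<bar> < d" for s
          proof -
            have e1: "dist (x0 + s *\<^sub>R v) x0 = \<bar>s\<bar> * norm v" by (simp add: dist_norm)
            have t1: "dist (x0 + s *\<^sub>R v) z \<le> dist (x0 + s *\<^sub>R v) x0 + dist x0 z" by (rule dist_triangle)
            have t2: "dist x0 z \<le> dist x0 (x0 + s *\<^sub>R v) + dist (x0 + s *\<^sub>R v) z" by (rule dist_triangle)
            have sv3: "\<bar>s\<bar> * norm v < \<delta>" "\<bar>s\<bar> * norm v < r0" "\<bar>s\<bar> * norm v < R - r0"
              using sv[OF that] by auto
            have "dist x0 (x0 + s *\<^sub>R v) = \<bar>s\<bar> * norm v" using e1 by (simp add: dist_commute)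
            then show ?thesis using t1 t2 sv3 e1 unfolding distQ r0_def[symmetric] by linarith
          qed
          define h where "h = (\<lambda>s. F (sqrt (Q s)))"
          define hd where "hd = (\<lambda>s. Fd (sqrt (Q s)) * ((Bv + s * Cv) / sqrt (Q s)))"
          have hder: "(h has_real_derivative hd s) (at s)" if "\<bar>s\<bar> < d" for s
          proof -
            have "0 < sqrt (Q s)" "sqrt (Q s) < R" using near[OF that] by auto
            then have q: "0 < sqrt (dd \<bullet> dd + 2 * s * Bv + s ^ 2 * Cv)" "sqrt (dd \<bullet> dd + 2 * s * Bv + s ^ 2 * Cv) < R"
              by (simp_all add: Q_def)
            show ?thesis using comp_deriv[OF q Fder] by (simp only: h_def hd_def Q_def)
          qed
          have A0: "dd \<bullet> dd > 0" using Ad r0 by simp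
          have h2: "(hd has_real_derivative (F2 * (Bv / r0)^2 + Fd r0 * ((Cv - Bv^2/(dd \<bullet> dd)) / r0))) (at 0)"
            using comp_deriv2[OF A0 F2', where B=Bv and C=Cv] by (simp only: hd_def Q_def sqA)
          have wline: "w (x0 + s *\<^sub>R v) t0 = h s * G0" for s
            by (simp add: wx h_def distQ)
          have pd: "((\<lambda>s. phi (x0 + s *\<^sub>R v) t0) has_real_derivative (Dphi (x0 + s *\<^sub>R v) t0 \<bullet> v)) (at s)"
            if "\<bar>s\<bar> < d" for s
          proof -
            have "x0 + s *\<^sub>R v \<in> ball x0 \<delta>" using near[OF that] by (simp add: dist_commute)
            from line_deriv1[OF dphi[OF this]] show ?thesis by simp
          qed
          have pd2: "((\<lambda>s. Dphi (x0 + s *\<^sub>R v) t0 \<bullet> v) has_real_derivative ((D2phi x0 t0 *v v) \<bullet> v)) (at 0)"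
            by (rule line_deriv2[OF d2])
          define g where "g = (\<lambda>s. phi (x0 + s *\<^sub>R v) t0 - h s * G0)"
          define g' where "g' = (\<lambda>s. Dphi (x0 + s *\<^sub>R v) t0 \<bullet> v - hd s * G0)"
          have gder: "(g has_real_derivative g' s) (at s)" if "\<bar>s\<bar> < d" for s
            unfolding g_def g'_def by (intro DERIV_diff pd[OF that] DERIV_cmult_right hder[OF that])
          have gmin: "g 0 \<le> g s" if "\<bar>s\<bar> < d" for s
          proof -
            have "w (x0 + s *\<^sub>R v) t0 - phi (x0 + s *\<^sub>R v) t0 \<le> w x0 t0 - phi x0 t0"
              by (rule mx') (use near[OF that] \<delta> in auto)
            then show ?thesis using wline[of s] wline[of 0] by (auto simp: g_def)
          qed
          have g2: "(g' has_real_derivative ((D2phi x0 t0 *v v) \<bullet> v - (F2 * (Bv / r0)^2 + Fd r0 * ((Cv - Bv^2/(dd \<bullet> dd)) / r0)) * G0)) (at 0)"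
            unfolding g'_def by (intro DERIV_diff pd2 DERIV_cmult_right h2)
          have so: "0 \<le> (D2phi x0 t0 *v v) \<bullet> v - (F2 * (Bv / r0)^2 + Fd r0 * ((Cv - Bv^2/(dd \<bullet> dd)) / r0)) * G0"
            by (rule second_order_min[OF d gder gmin g2])
          have "g' 0 = 0" by (rule DERIV_local_min[OF gder[of 0] d]) (use d gmin in auto)
          then have "Dphi x0 t0 \<bullet> v = hd 0 * G0" by (simp add: g'_def)
          moreover have "hd 0 = Fd r0 * (Bv / r0)" using sqA by (simp add: hd_def Q_def)
          ultimately have "Dphi x0 t0 \<bullet> v = (q / r0) * (dd \<bullet> v)" by (simp add: q_def Bv_def mult_ac)
          moreover have "G0 * (F2 * ((dd \<bullet> v) / r0)^2 + Fd r0 * (((v \<bullet> v) - (dd \<bullet> v)^2 / r0^2) / r0)) \<le> (D2phi x0 t0 *v v) \<bullet> v"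
            using so by (simp add: Bv_def Cv_def Ad mult.commute)
          ultimately show ?thesis by blast
        qed
        have Dq: "Dphi x0 t0 = q *\<^sub>R e"
          by (rule vec_eq_by_inner) (use vfacts r0 in \<open>simp add: e_def\<close>)
        define M where "M = (F2 * G0) *\<^sub>R outer e + (q / r0) *\<^sub>R (mat 1 - outer e)"
        have symM: "sym_mat M" unfolding M_def by (rule sym_M)
        have leM: "mat_le M (D2phi x0 t0)"
          unfolding mat_le_def
        proof
          fix v :: "real^'n"
          have ev: "e \<bullet> v = (dd \<bullet> v) / r0" by (simp add: e_def)
          have "v \<bullet> (M *v v) = G0 * (F2 * ((dd \<bullet> v) / r0)^2 + Fd r0 * (((v \<bullet> v) - (dd \<bullet> v)^2 / r0^2) / r0))"
            unfolding M_def quad_M ev q_def using r0 by (simp add: field_simps power2_eq_square)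
          also have "\<dots> \<le> (D2phi x0 t0 *v v) \<bullet> v" using vfacts by blast
          finally show "0 \<le> v \<bullet> ((D2phi x0 t0 - M) *v v)"
            by (simp add: matrix_vector_mult_diff_rdistrib inner_diff_right inner_commute)
        qed
        have mono: "H (Dphi x0 t0) M \<le> H (Dphi x0 t0) (D2phi x0 t0)"
          using A symM symD2 leM unfolding condA_def by blast
        define s0 where "s0 = r0 / R"
        define u0 where "u0 = s0 powr a"
        have s0: "0 < s0" "s0 < 1" using r0 by (auto simp: s0_def)
        have u0: "0 < u0" "u0 < 1"
        proof -
          show "0 < u0" using s0 by (simp add: u0_def)
          have "s0 powr a < 1 powr a" using s0 a0 by (intro powr_less_mono2) auto
          then show "u0 < 1" by (simp add: u0_def)
        qed
        define absq where "absq = \<mu> * b * (1 - u0) powr (b - 1) * a * s0 powr (a - 1) / R * G0"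
        have absq_pos: "absq > 0" unfolding absq_def
          using mu_pos b0 u0 a0 s0 R_pos G0 by (intro mult_pos_pos divide_pos_pos) auto
        have q_eq: "q = - absq" by (simp add: q_def Fd_def absq_def s0_def[symmetric] u0_def[symmetric] mult_ac)
        define \<theta> where "\<theta> = absq / r0"
        have \<theta>: "\<theta> > 0" using absq_pos r0 by (simp add: \<theta>_def)
        define lam where "lam = F2 * G0 / \<theta> + 1"
        have Mform: "M = \<theta> *\<^sub>R (lam *\<^sub>R outer e - mat 1)"
        proof -
          have "q / r0 = - \<theta>" by (simp add: q_eq \<theta>_def)
          then show ?thesis unfolding M_def lam_def using M_form[of \<theta> "F2 * G0" e] \<theta> by simp
        qed
        have HN: "N \<le> H e (lam *\<^sub>R outer e - mat 1)"
        proof -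
          have "N \<le> (INF e\<in>sphere 0 1. H e (lam *\<^sub>R outer e - mat 1))"
            unfolding N_def by (rule cINF_lower[OF N_fin]) simp
          also have "\<dots> \<le> H e (lam *\<^sub>R outer e - mat 1)"
            by (rule cINF_lower[OF inner_bdd[OF Hcont]]) (simp add: en)
          finally show ?thesis .
        qed
        have HM: "H (Dphi x0 t0) M = absq powr k1 * (\<theta> * H e (lam *\<^sub>R outer e - mat 1))"
        proof -
          have "H (q *\<^sub>R e) M = \<bar>q\<bar> powr k1 * H e M"
            using B symM unfolding condB_def by blast
          moreover have "H e M = \<theta> * H e (lam *\<^sub>R outer e - mat 1)"
            unfolding Mform using B \<theta> sym_outer unfolding condB_def by blast
          ultimately show ?thesis using Dq q_eq absq_pos by simp
        qed
        have lower: "absq powr k1 * \<theta> * N \<le> H (Dphi x0 t0) (D2phi x0 t0)"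
        proof -
          have "\<theta> * N \<le> \<theta> * H e (lam *\<^sub>R outer e - mat 1)" using HN \<theta> by (simp add: mult_left_mono)
          then have "absq powr k1 * (\<theta> * N) \<le> absq powr k1 * (\<theta> * H e (lam *\<^sub>R outer e - mat 1))"
            by (rule mult_left_mono) simp
          then show ?thesis using HM mono by (simp add: mult.assoc)
        qed
        have ident: "absq powr k1 * \<theta> * N = wt"
        proof -
          define MK1 where "MK1 = \<mu> powr (k - 1)"
          define RK where "RK = R powr k"
          define U where "U = (1 - u0) powr b"
          define LL where "LL = L0 powr (- \<beta> - 1)"
          have muk: "\<mu> powr k = \<mu> * MK1"
          proof -
            have "\<mu> powr k = \<mu> powr (1 + (k - 1))" by simp
            also have "\<dots> = \<mu> powr 1 * \<mu> powr (k - 1)" by (rule powr_add)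
            finally show ?thesis using mu_pos by (simp add: MK1_def)
          qed
          have RK1: "R powr (k + 1) = RK * R"
          proof -
            have "R powr (k + 1) = R powr k * R powr 1" by (rule powr_add)
            then show ?thesis using R_pos by (simp add: RK_def)
          qed
          have ex1: "(b - 1) * k = b" using k_gt by (simp add: b_def field_simps)
          have ex2: "(a - 1) * k = 1" using k_gt by (simp add: a_def field_simps)
          have ex3: "- \<beta> * k = - \<beta> - 1" using k_gt by (simp add: \<beta>_def field_simps)
          have ba: "b * a = (k + 1) / (k - 1)" using k_gt by (simp add: a_def b_def field_simps)
          have ab: "b powr k * a powr k = c"
          proof -
            have "b powr k * a powr k = (b * a) powr k" by (rule powr_mult[symmetric])
            then show ?thesis by (simp add: ba c_def)
          qed
          have absk0: "absq powr k = \<mu> powr k * b powr k * (1 - u0) powr ((b - 1) * k) * a powr k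
              * s0 powr ((a - 1) * k) / R powr k * L0 powr (- \<beta> * k)"
            unfolding absq_def G0_def by (simp only: powr_mult powr_divide powr_powr)
          have s0one: "s0 powr 1 = s0" using s0 by simp
          have absk: "absq powr k = \<mu> powr k * b powr k * U * a powr k * s0 / RK * LL"
            using absk0[unfolded ex1 ex2 ex3 s0one, folded U_def LL_def RK_def] .
          have th: "absq powr k1 * \<theta> = absq powr k / r0"
          proof -
            have "absq powr k = absq powr k1 * absq powr 1" unfolding k_def by (rule powr_add)
            then show ?thesis using absq_pos by (simp add: \<theta>_def)
          qed
          have Fr0: "F (dist x0 z) = \<mu> * U"
            by (simp add: F_def r0_def[symmetric] s0_def[symmetric] u0_def[symmetric] U_def)
          have r0s: "r0 = s0 * R" using R_pos by (simp add: s0_def)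
          have Eeq: "E = RK * R / (c * MK1 * (k - 1) * (- N))"
            unfolding E_def RK1 MK1_def[symmetric] Nabs(1) ..
          have lhs: "absq powr k1 * \<theta> * N = \<mu> * MK1 * (b powr k * a powr k) * U * s0 / RK * LL / (s0 * R) * N"
            unfolding th absk muk r0s by (simp add: mult_ac)
          have nz: "RK \<noteq> 0" "MK1 \<noteq> 0" "c \<noteq> 0" "N \<noteq> 0" "s0 \<noteq> 0" "R \<noteq> 0" "k - 1 \<noteq> 0"
            using R_pos mu_pos cpos N_neg s0 k_gt by (auto simp: RK_def MK1_def)
          have rhs: "wt = \<mu> * U * (- \<beta> * LL / (RK * R / (c * MK1 * (k - 1) * (- N))))"
            unfolding wt_def Fr0 Eeq LL_def[symmetric] by (rule refl)
          show ?thesis unfolding lhs ab rhs \<beta>_def using nz by (simp add: field_simps)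
        qed
        show ?thesis using lower ident phit_eq by simp
      qed
    qed
    have usc': "usc_on (\<lambda>(x, t). w x t) (ball z R \<times> {0<..<T})" using usc by (simp add: S_def)
    show ?thesis
      unfolding visc_subsol_def
      using usc' sub by blast
  qed
  show ?thesis using part1 part2 part3 part4 by blast
qed

end
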